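(* Let $\mathcal{M}=(S,\mathcal{I})$ be a courteously colored matroid of rank $r$ such that for every $s\in S$, the matroid $\mathcal{M}\setminus\{s\}$ (obtained by deleting $s$) is not courteously colored. Then $|S|\le 2r$, and this upper bound is sharp (for every positive integer $r$ there is such a matroid with $|S|=2r$).
   Context: A coloring of a matroid assigns a color to each element of its ground set; deletions inherit colors. For a color $c$, $\mathcal{M}_{\overline{c}}$ is the matroid obtained by deleting all elements of color $c$. A colored matroid $\mathcal{M}$ is courteously colored if for every color $c$, the rank of $\mathcal{M}_{\overline{c}}$ equals the rank of $\mathcal{M}$. *)

theory Defs
  imports Main
begin

definition matroid :: "'a set \<Rightarrow> ('a set \<Rightarrow> bool) \<Rightarrow> bool" where
  "matroid S indep \<longleftrightarrow>
     finite S \<and>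
     (\<forall>I. indep I \<longrightarrow> I \<subseteq> S) \<and>
     indep {} \<and>
     (\<forall>I J. indep J \<and> I \<subseteq> J \<longrightarrow> indep I) \<and>
     (\<forall>I J. indep I \<and> indep J \<and> card I < card J \<longrightarrow> (\<exists>x\<in>J - I. indep (insert x I)))"

definition rk :: "('a set \<Rightarrow> bool) \<Rightarrow> 'a set \<Rightarrow> nat" where
  "rk indep A = Max {card I | I. I \<subseteq> A \<and> indep I}"

definition mrank :: "'a set \<Rightarrow> ('a set \<Rightarrow> bool) \<Rightarrow> nat" where
  "mrank S indep = rk indep S"

definition del_ground :: "'a set \<Rightarrow> 'a set \<Rightarrow> 'a set" where
  "del_ground S X = S - X"

definition del_indep :: "('a set \<Rightarrow> bool) \<Rightarrow> 'a set \<Rightarrow> 'a set \<Rightarrow> bool" where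
  "del_indep indep X = (\<lambda>I. indep I \<and> I \<inter> X = {})"

definition courteous :: "'a set \<Rightarrow> ('a set \<Rightarrow> bool) \<Rightarrow> ('a \<Rightarrow> 'c) \<Rightarrow> bool" where
  "courteous S indep col \<longleftrightarrow>
     (\<forall>c. mrank (del_ground S (col -` {c})) (del_indep indep (col -` {c})) = mrank S indep)"

end

theory Submission
  imports Defs
begin

lemma rk_del: "A \<inter> X = {} \<Longrightarrow> rk (del_indep P X) A = rk P A"
proof -
  assume a: "A \<inter> X = {}"
  have "{card I |I. I \<subseteq> A \<and> del_indep P X I} = {card I |I. I \<subseteq> A \<and> P I}"
    using a unfolding del_indep_def by blast
  thus ?thesis unfolding rk_def by simp
qed

lemma courteous_iff:
  "courteous S indep col \<longleftrightarrow> (\<forall>c. rk indep (S - col -` {c}) = rk indep S)"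
proof -
  have "rk (del_indep indep (col -` {c})) (S - col -` {c}) = rk indep (S - col -` {c})" for c
    by (rule rk_del) blast
  thus ?thesis unfolding courteous_def mrank_def del_ground_def by simp
qed

lemma courteous_del_iff:
  "courteous (del_ground S {s}) (del_indep indep {s}) col \<longleftrightarrow>
    (\<forall>c. rk indep (S - {s} - col -` {c}) = rk indep (S - {s}))"
proof -
  have e1: "rk (del_indep (del_indep indep {s}) (col -` {c})) (S - {s} - col -` {c})
      = rk indep (S - {s} - col -` {c})" for c
    by (subst rk_del, blast, subst rk_del, blast, rule refl)
  have e2: "rk (del_indep indep {s}) (S - {s}) = rk indep (S - {s})"
    by (rule rk_del) blast
  show ?thesis unfolding courteous_def mrank_def del_ground_def using e1 e2 by simp
qed

lemma rk_fin:
  assumes m: "matroid S indep"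
  shows "finite {card I |I. I \<subseteq> A \<and> indep I}"
proof -
  have "{card I |I. I \<subseteq> A \<and> indep I} \<subseteq> {..card S}"
  proof
    fix k assume "k \<in> {card I |I. I \<subseteq> A \<and> indep I}"
    then obtain I where "k = card I" "indep I" by blast
    with m show "k \<in> {..card S}" unfolding matroid_def by (auto intro: card_mono)
  qed
  thus ?thesis using finite_subset by blast
qed

lemma rk_le:
  assumes m: "matroid S indep" and "indep I" "I \<subseteq> A"
  shows "card I \<le> rk indep A"
  unfolding rk_def using assms rk_fin[OF m, of A] by (auto intro!: Max_ge)

lemma rk_ex:
  assumes m: "matroid S indep"
  shows "\<exists>I. I \<subseteq> A \<and> indep I \<and> card I = rk indep A"
proof -
  have "{} \<subseteq> A \<and> indep {}" using m unfolding matroid_def by auto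
  hence ne: "{card I |I. I \<subseteq> A \<and> indep I} \<noteq> {}" by blast
  have "rk indep A \<in> {card I |I. I \<subseteq> A \<and> indep I}"
    unfolding rk_def by (rule Max_in[OF rk_fin[OF m] ne])
  thus ?thesis by auto
qed

lemma rk_mono:
  assumes m: "matroid S indep" and "A \<subseteq> B"
  shows "rk indep A \<le> rk indep B"
proof -
  obtain I where "I \<subseteq> A" "indep I" "card I = rk indep A" using rk_ex[OF m] by blast
  thus ?thesis using rk_le[OF m, of I B] assms by auto
qed

lemma extend_aux:
  assumes m: "matroid S indep"
  shows "\<forall>I. rk indep A - card I = n \<longrightarrow> indep I \<longrightarrow> I \<subseteq> A \<longrightarrow>
     (\<exists>J. I \<subseteq> J \<and> J \<subseteq> A \<and> indep J \<and> card J = rk indep A)"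
proof (induction n rule: nat_less_induct)
  case (1 n)
  show ?case
  proof (intro allI impI)
    fix I assume n: "rk indep A - card I = n" and iI: "indep I" and IA: "I \<subseteq> A"
    have le: "card I \<le> rk indep A" using rk_le[OF m iI IA] .
    show "\<exists>J. I \<subseteq> J \<and> J \<subseteq> A \<and> indep J \<and> card J = rk indep A"
    proof (cases "card I = rk indep A")
      case True thus ?thesis using iI IA by blast
    next
      case False
      hence lt: "card I < rk indep A" using le by simp
      obtain K where K: "K \<subseteq> A" "indep K" "card K = rk indep A" using rk_ex[OF m] by blast
      obtain x where x: "x \<in> K - I" "indep (insert x I)"
        proof -
        have "\<forall>I J. indep I \<and> indep J \<and> card I < card J \<longrightarrow> (\<exists>x\<in>J - I. indep (insert x I))"
          using m unfolding matroid_def by blast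
        hence "\<exists>x\<in>K - I. indep (insert x I)" using iI K lt by simp
        thus ?thesis using that by blast
      qed
      have finI: "finite I" using m iI unfolding matroid_def by (meson finite_subset)
      have ci: "card (insert x I) = card I + 1" using x finI by simp
      have "rk indep A - card (insert x I) < n" using ci lt n by simp
      moreover have "insert x I \<subseteq> A" using x K IA by blast
      moreover note IH = "1"[rule_format, of "rk indep A - card (insert x I)" "insert x I"]
      ultimately obtain J where "insert x I \<subseteq> J" "J \<subseteq> A" "indep J" "card J = rk indep A"
        using x(2) by blast
      thus ?thesis by (intro exI[of _ J]) auto
    qed
  qed
qed

lemma extend:
  assumes m: "matroid S indep" and "indep I" "I \<subseteq> A"
  shows "\<exists>J. I \<subseteq> J \<and> J \<subseteq> A \<and> indep J \<and> card J = rk indep A"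
  using extend_aux[OF m] assms by blast

lemma part1:
  fixes S :: "'a set" and col :: "'a \<Rightarrow> 'c"
  assumes m: "matroid S indep" and co: "courteous S indep col"
    and mn: "\<forall>s\<in>S. \<not> courteous (del_ground S {s}) (del_indep indep {s}) col"
  shows "card S \<le> 2 * mrank S indep"
proof -
  define r where "r = rk indep S"
  have finS: "finite S" using m unfolding matroid_def by blast
  have subS: "indep I \<Longrightarrow> I \<subseteq> S" for I using m unfolding matroid_def by blast
  have downc: "indep J \<Longrightarrow> I \<subseteq> J \<Longrightarrow> indep I" for I J using m unfolding matroid_def by blast
  have rD: "rk indep (S - col -` {c}) = r" for c using co unfolding courteous_iff r_def by blast
  obtain B where B: "B \<subseteq> S" "indep B" "card B = r" using rk_ex[OF m] r_def by blast
  have "\<forall>c. \<exists>J. B - col -` {c} \<subseteq> J \<and> J \<subseteq> S - col -` {c} \<and> indep J \<and> card J = r"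
  proof
    fix c
    have "indep (B - col -` {c})" using downc B by blast
    moreover have "B - col -` {c} \<subseteq> S - col -` {c}" using B by blast
    ultimately have "\<exists>J. B - col -` {c} \<subseteq> J \<and> J \<subseteq> S - col -` {c} \<and> indep J \<and> card J = rk indep (S - col -` {c})"
      by (rule extend[OF m])
    then obtain J0 where "B - col -` {c} \<subseteq> J0" "J0 \<subseteq> S - col -` {c}" "indep J0"
       "card J0 = rk indep (S - col -` {c})" by blast
    thus "\<exists>J. B - col -` {c} \<subseteq> J \<and> J \<subseteq> S - col -` {c} \<and> indep J \<and> card J = r"
      by (intro exI[of _ J0]) (simp add: rD)
  qed
  from choice[OF this] obtain J where JJ: "\<forall>c. B - col -` {c} \<subseteq> J c \<and> J c \<subseteq> S - col -` {c} \<and> indep (J c) \<and> card (J c) = r" ..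
  have J: "\<And>c. B - col -` {c} \<subseteq> J c" "\<And>c. J c \<subseteq> S - col -` {c}"
    "\<And>c. indep (J c)" "\<And>c. card (J c) = r" using JJ by blast+
  have finJ: "finite (J c)" for c using J(2)[of c] finS finite_subset by blast
  have finB: "finite B" using B finS finite_subset by blast
  have cov: "\<exists>c. s \<in> J c" if s: "s \<in> S" for s
  proof -
    from mn s obtain c where c: "rk indep (S - {s} - col -` {c}) \<noteq> rk indep (S - {s})"
      unfolding courteous_del_iff by blast
    show ?thesis
    proof (rule exI[of _ c], rule ccontr)
      assume "s \<notin> J c"
      hence "J c \<subseteq> S - {s} - col -` {c}" using J(2)[of c] by blast
      hence "r \<le> rk indep (S - {s} - col -` {c})" using rk_le[OF m J(3)[of c]] J(4)[of c] by simp
      moreover have "rk indep (S - {s} - col -` {c}) \<le> rk indep (S - {s})" by (rule rk_mono[OF m]) blast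
      moreover have "rk indep (S - {s}) \<le> r" unfolding r_def by (rule rk_mono[OF m]) blast
      ultimately show False using c by simp
    qed
  qed
  have sz: "card (J c - B) \<le> card (B \<inter> col -` {c})" for c
  proof -
    have "B - col -` {c} \<subseteq> J c \<inter> B" using J(1)[of c] by blast
    hence "card (B - col -` {c}) \<le> card (J c \<inter> B)" using finJ by (intro card_mono) auto
    moreover have "card (B - col -` {c}) = r - card (B \<inter> col -` {c})"
      using B(3) finB by (simp add: card_Diff_subset_Int)
    moreover have "card (B \<inter> col -` {c}) \<le> r" using B(3) finB by (metis card_mono inf_le1)
    moreover have "card (J c - B) = r - card (J c \<inter> B)"
      using J(4)[of c] finJ[of c] by (simp add: card_Diff_subset_Int)
    ultimately show ?thesis by linarith
  qed
  have empt: "J c - B = {}" if "c \<notin> col ` B" for c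
  proof -
    have "B \<inter> col -` {c} = {}" using that by blast
    hence "card (J c - B) = 0" using sz[of c] by simp
    thus ?thesis using finJ[of c] by simp
  qed
  have Ssub: "S \<subseteq> B \<union> (\<Union>c\<in>col ` B. J c - B)"
  proof
    fix s assume "s \<in> S"
    then obtain c where "s \<in> J c" using cov by blast
    thus "s \<in> B \<union> (\<Union>c\<in>col ` B. J c - B)" using empt[of c] by blast
  qed
  have "card S \<le> card (B \<union> (\<Union>c\<in>col ` B. J c - B))"
    using Ssub finB finJ by (intro card_mono) auto
  also have "\<dots> \<le> card B + card (\<Union>c\<in>col ` B. J c - B)" by (rule card_Un_le)
  also have "card (\<Union>c\<in>col ` B. J c - B) \<le> (\<Sum>c\<in>col ` B. card (J c - B))"
    by (rule card_UN_le) (use finB in simp)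
  also have "\<dots> \<le> (\<Sum>c\<in>col ` B. card (B \<inter> col -` {c}))" by (rule sum_mono) (rule sz)
  also have "\<dots> = card (\<Union>c\<in>col ` B. B \<inter> col -` {c})"
    by (rule card_UN_disjoint[symmetric]) (use finB in auto)
  also have "(\<Union>c\<in>col ` B. B \<inter> col -` {c}) = B" by blast
  finally show ?thesis using B(3) unfolding mrank_def r_def by simp
qed


definition indepU :: "nat \<Rightarrow> nat set \<Rightarrow> bool" where
  "indepU r I \<longleftrightarrow> I \<subseteq> {0..<2*r} \<and> card I \<le> r"

lemma matroidU: "matroid {0..<2*r} (indepU r)"
  unfolding matroid_def
proof (intro conjI allI impI)
  fix I J assume a: "indepU r J \<and> I \<subseteq> J"
  hence "finite J" unfolding indepU_def using finite_subset by blast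
  thus "indepU r I" using a card_mono[of J I] unfolding indepU_def by auto
next
  fix I J assume a: "indepU r I \<and> indepU r J \<and> card I < card J"
  have fI: "finite I" "finite J" using a unfolding indepU_def using finite_subset by blast+
  have "\<not> J \<subseteq> I" using a fI card_mono[of I J] by auto
  then obtain x where x: "x \<in> J - I" by blast
  have "card (insert x I) = card I + 1" using x fI by simp
  hence "indepU r (insert x I)" using a x unfolding indepU_def by auto
  thus "\<exists>x\<in>J - I. indepU r (insert x I)" using x by blast
qed (auto simp: indepU_def)

lemma rkU:
  assumes "A \<subseteq> {0..<2*r}"
  shows "rk (indepU r) A = min (card A) r"
proof -
  have fA: "finite A" using assms finite_subset by blast
  have "{card I |I. I \<subseteq> A \<and> indepU r I} = {..min (card A) r}"
  proof
    show "{card I |I. I \<subseteq> A \<and> indepU r I} \<subseteq> {..min (card A) r}"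
      using fA card_mono unfolding indepU_def by fastforce
  next
    show "{..min (card A) r} \<subseteq> {card I |I. I \<subseteq> A \<and> indepU r I}"
    proof
      fix k assume "k \<in> {..min (card A) r}"
      hence k: "k \<le> card A" "k \<le> r" by auto
      obtain I where "I \<subseteq> A" "card I = k" using obtain_subset_with_card_n[OF k(1)] by metis
      thus "k \<in> {card I |I. I \<subseteq> A \<and> indepU r I}" using assms k unfolding indepU_def by blast
    qed
  qed
  moreover have "Max {..min (card A) r} = min (card A) r" by (rule Max_eqI) auto
  ultimately show ?thesis unfolding rk_def by simp
qed

lemma part2:
  assumes r: "r > 0"
  shows "\<exists>(S :: nat set) indep (col :: nat \<Rightarrow> nat).
               matroid S indep \<and> courteous S indep col \<and>
               (\<forall>s\<in>S. \<not> courteous (del_ground S {s}) (del_indep indep {s}) col) \<and>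
               mrank S indep = r \<and> card S = 2 * r"
proof -
  define S where "S = {0..<2*r}"
  define col :: "nat \<Rightarrow> nat" where "col x = (if x < r then 0 else 1)" for x
  have rS: "rk (indepU r) S = r" unfolding S_def by (subst rkU) auto
  have co: "courteous S (indepU r) col"
    unfolding courteous_iff rS
  proof
    fix c
    have sub: "S - col -` {c} \<subseteq> {0..<2*r}" unfolding S_def by blast
    have "{0..<r} \<subseteq> S - col -` {c} \<or> {r..<2*r} \<subseteq> S - col -` {c}"
      unfolding S_def col_def by (cases "c = 0") auto
    hence "r \<le> card (S - col -` {c})"
      using card_mono[of "S - col -` {c}" "{0..<r}"] card_mono[of "S - col -` {c}" "{r..<2*r}"]
      unfolding S_def by auto
    thus "rk (indepU r) (S - col -` {c}) = r" using rkU[OF sub] by simp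
  qed
  have nc: "\<not> courteous (del_ground S {s}) (del_indep (indepU r) {s}) col" if s: "s \<in> S" for s
  proof -
    define c where "c = (if s < r then 1 else (0::nat))"
    have sub1: "S - {s} - col -` {c} \<subseteq> {0..<2*r}" unfolding S_def by blast
    have sub2: "S - {s} \<subseteq> {0..<2*r}" unfolding S_def by blast
    have cS: "card (S - {s}) = 2*r - 1" using s unfolding S_def by simp
    have e: "S - {s} - col -` {c} = (if s < r then {0..<r} - {s} else {r..<2*r} - {s})"
      unfolding S_def c_def col_def by auto
    have "card (S - {s} - col -` {c}) = r - 1" unfolding e using s unfolding S_def by auto
    hence "rk (indepU r) (S - {s} - col -` {c}) \<noteq> rk (indepU r) (S - {s})"
      using rkU[OF sub1] rkU[OF sub2] cS r by simp
    thus ?thesis unfolding courteous_del_iff by blast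
  qed
  show ?thesis
    apply (rule exI[of _ S], rule exI[of _ "indepU r"], rule exI[of _ col])
    using matroidU[of r] co nc rS unfolding S_def mrank_def by auto
qed

theorem corollary3p8:
  shows "(\<forall>(S :: 'a set) indep (col :: 'a \<Rightarrow> 'c).
            matroid S indep \<and> courteous S indep col \<and>
            (\<forall>s\<in>S. \<not> courteous (del_ground S {s}) (del_indep indep {s}) col)
            \<longrightarrow> card S \<le> 2 * mrank S indep)
       \<and> (\<forall>r::nat. r > 0 \<longrightarrow>
            (\<exists>(S :: nat set) indep (col :: nat \<Rightarrow> nat).
               matroid S indep \<and> courteous S indep col \<and>
               (\<forall>s\<in>S. \<not> courteous (del_ground S {s}) (del_indep indep {s}) col) \<and>
               mrank S indep = r \<and> card S = 2 * r))"
  using part1 part2 by blast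

end
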